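(* Let $X$ be an antipodal distance-regular graph of diameter $3$ on $n$ vertices. If $X$ is not a cocktail-party graph, then $\mathrm{motion}(X)\geq\frac{1}{13}n$.
   Context: A distance-regular graph of diameter $d$ is a connected graph such that for vertices $v,w$ at distance $i$ the numbers of neighbours of $w$ at distance $i-1,i,i+1$ from $v$ are constants depending only on $i$. It is antipodal if being at distance $d$ or equal is an equivalence relation on vertices. A cocktail-party graph is a regular complete bipartite graph with one perfect matching removed. The motion of a graph is the minimum, over non-identity automorphisms, of the number of vertices not fixed. *)

theory Defs
  imports Main "HOL-Library.Extended_Nat"
begin

definition simple_graph :: "'a set \<Rightarrow> ('a \<Rightarrow> 'a \<Rightarrow> bool) \<Rightarrow> bool" where
  "simple_graph V E \<longleftrightarrow> finite V \<and> (\<forall>u v. E u v \<longrightarrow> u \<in> V \<and> v \<in> V)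
     \<and> (\<forall>u v. E u v \<longrightarrow> E v u) \<and> (\<forall>u. \<not> E u u)"

definition is_walk :: "'a set \<Rightarrow> ('a \<Rightarrow> 'a \<Rightarrow> bool) \<Rightarrow> 'a list \<Rightarrow> bool" where
  "is_walk V E p \<longleftrightarrow> p \<noteq> [] \<and> set p \<subseteq> V \<and> (\<forall>i. Suc i < length p \<longrightarrow> E (p ! i) (p ! Suc i))"

definition walk_between :: "'a set \<Rightarrow> ('a \<Rightarrow> 'a \<Rightarrow> bool) \<Rightarrow> 'a \<Rightarrow> 'a \<Rightarrow> nat \<Rightarrow> bool" where
  "walk_between V E u v k \<longleftrightarrow> (\<exists>p. is_walk V E p \<and> hd p = u \<and> last p = v \<and> length p = Suc k)"

definition connected_graph :: "'a set \<Rightarrow> ('a \<Rightarrow> 'a \<Rightarrow> bool) \<Rightarrow> bool" where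
  "connected_graph V E \<longleftrightarrow> V \<noteq> {} \<and> (\<forall>u\<in>V. \<forall>v\<in>V. \<exists>k. walk_between V E u v k)"

text \<open>Graph distance (meaningful for connected graphs).\<close>
definition gdist :: "'a set \<Rightarrow> ('a \<Rightarrow> 'a \<Rightarrow> bool) \<Rightarrow> 'a \<Rightarrow> 'a \<Rightarrow> nat" where
  "gdist V E u v = (LEAST k. walk_between V E u v k)"

definition diameter :: "'a set \<Rightarrow> ('a \<Rightarrow> 'a \<Rightarrow> bool) \<Rightarrow> nat" where
  "diameter V E = Max {gdist V E u v | u v. u \<in> V \<and> v \<in> V}"

definition distance_regular :: "'a set \<Rightarrow> ('a \<Rightarrow> 'a \<Rightarrow> bool) \<Rightarrow> bool" where
  "distance_regular V E \<longleftrightarrow> simple_graph V E \<and> connected_graph V E \<and>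
     (\<exists>c a b :: nat \<Rightarrow> nat. \<forall>v\<in>V. \<forall>w\<in>V.
        card {x \<in> V. E w x \<and> gdist V E v x + 1 = gdist V E v w} = c (gdist V E v w) \<and>
        card {x \<in> V. E w x \<and> gdist V E v x = gdist V E v w} = a (gdist V E v w) \<and>
        card {x \<in> V. E w x \<and> gdist V E v x = gdist V E v w + 1} = b (gdist V E v w))"

definition antipodal :: "'a set \<Rightarrow> ('a \<Rightarrow> 'a \<Rightarrow> bool) \<Rightarrow> bool" where
  "antipodal V E \<longleftrightarrow> equiv V {(u, v). u \<in> V \<and> v \<in> V \<and> (u = v \<or> gdist V E u v = diameter V E)}"

text \<open>Cocktail-party graph (as in the paper): isomorphic to K_{m,m} minus a perfect matching.\<close>
definition cocktail_party :: "'a set \<Rightarrow> ('a \<Rightarrow> 'a \<Rightarrow> bool) \<Rightarrow> bool" where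
  "cocktail_party V E \<longleftrightarrow> (\<exists>A B \<sigma>. A \<inter> B = {} \<and> A \<union> B = V \<and> bij_betw \<sigma> A B \<and>
     (\<forall>x y. E x y \<longleftrightarrow> (x \<in> A \<and> y \<in> B \<and> y \<noteq> \<sigma> x) \<or> (y \<in> A \<and> x \<in> B \<and> x \<noteq> \<sigma> y)))"

definition automorphism :: "'a set \<Rightarrow> ('a \<Rightarrow> 'a \<Rightarrow> bool) \<Rightarrow> ('a \<Rightarrow> 'a) \<Rightarrow> bool" where
  "automorphism V E f \<longleftrightarrow> bij_betw f V V \<and> (\<forall>u\<in>V. \<forall>v\<in>V. E u v \<longleftrightarrow> E (f u) (f v))"

text \<open>Motion: minimum number of moved vertices over non-identity automorphisms
  (infinity if there is no non-identity automorphism).\<close>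
definition motion :: "'a set \<Rightarrow> ('a \<Rightarrow> 'a \<Rightarrow> bool) \<Rightarrow> enat" where
  "motion V E = (INF f \<in> {f. automorphism V E f \<and> (\<exists>v\<in>V. f v \<noteq> v)}.
                    enat (card {v \<in> V. f v \<noteq> v}))"

end

theory Submission
  imports Defs
begin



locale adrg =
  fixes V :: "'a set" and E :: "'a \<Rightarrow> 'a \<Rightarrow> bool"
    and cc aa bb :: "nat \<Rightarrow> nat"
  assumes sg: "simple_graph V E" and conn: "connected_graph V E"
    and cnt: "\<forall>v\<in>V. \<forall>w\<in>V.
        card {x \<in> V. E w x \<and> gdist V E v x + 1 = gdist V E v w} = cc (gdist V E v w) \<and>
        card {x \<in> V. E w x \<and> gdist V E v x = gdist V E v w} = aa (gdist V E v w) \<and>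
        card {x \<in> V. E w x \<and> gdist V E v x = gdist V E v w + 1} = bb (gdist V E v w)"
    and diam: "diameter V E = 3"
    and antip: "antipodal V E"
begin

abbreviation "W \<equiv> walk_between V E"
abbreviation "d \<equiv> gdist V E"

lemma finV: "finite V" using sg unfolding simple_graph_def by auto
lemma EV1: "E u v \<Longrightarrow> u \<in> V" using sg unfolding simple_graph_def by auto
lemma EV2: "E u v \<Longrightarrow> v \<in> V" using sg unfolding simple_graph_def by auto
lemma Esym: "E u v \<Longrightarrow> E v u" using sg unfolding simple_graph_def by auto
lemma Eirr: "\<not> E u u" using sg unfolding simple_graph_def by auto

lemma W0: "W u v 0 \<longleftrightarrow> u = v \<and> u \<in> V"
proof
  assume "W u v 0"
  then obtain p where p: "is_walk V E p" "hd p = u" "last p = v" "length p = 1"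
    unfolding walk_between_def by auto
  then obtain x where "p = [x]" by (cases p) auto
  thus "u = v \<and> u \<in> V" using p unfolding is_walk_def by auto
next
  assume "u = v \<and> u \<in> V"
  thus "W u v 0" unfolding walk_between_def is_walk_def
    by (rule_tac x="[u]" in exI) auto
qed

lemma WS: "W u v (Suc k) \<longleftrightarrow> (\<exists>w. W u w k \<and> E w v)"
proof
  assume "W u v (Suc k)"
  then obtain p where p: "is_walk V E p" "hd p = u" "last p = v" "length p = Suc (Suc k)"
    unfolding walk_between_def by auto
  define q where "q = butlast p"
  have lq: "length q = Suc k" using p(4) unfolding q_def by simp
  have qn: "q \<noteq> []" using lq by auto
  have pq: "p = q @ [v]" using p(3) p(4) unfolding q_def
    by (metis append_butlast_last_id list.size(3) nat.distinct(1))
  have "is_walk V E q" using p(1) qn unfolding is_walk_def pq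
    by (auto simp: nth_append) (metis Suc_lessD)
  moreover have "hd q = u" using p(2) qn pq by simp
  moreover have "E (last q) v"
  proof -
    have "E (p ! k) (p ! Suc k)" using p(1) p(4) unfolding is_walk_def by auto
    moreover have "p ! k = last q" using pq lq qn by (simp add: nth_append last_conv_nth)
    moreover have "p ! Suc k = v" using pq lq by (simp add: nth_append)
    ultimately show ?thesis by simp
  qed
  ultimately show "\<exists>w. W u w k \<and> E w v" unfolding walk_between_def using lq by blast
next
  assume "\<exists>w. W u w k \<and> E w v"
  then obtain w p where p: "is_walk V E p" "hd p = u" "last p = w" "length p = Suc k" and e: "E w v"
    unfolding walk_between_def by auto
  have pn: "p \<noteq> []" using p(4) by auto
  have "is_walk V E (p @ [v])" unfolding is_walk_def
  proof (intro conjI allI impI)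
    show "set (p @ [v]) \<subseteq> V" using p(1) EV2[OF e] unfolding is_walk_def by auto
    fix i assume i: "Suc i < length (p @ [v])"
    show "E ((p @ [v]) ! i) ((p @ [v]) ! Suc i)"
    proof (cases "Suc i < length p")
      case True thus ?thesis using p(1) unfolding is_walk_def by (auto simp: nth_append)
    next
      case False
      hence "i = k" using i p(4) by auto
      thus ?thesis using p(3,4) pn e by (auto simp: nth_append last_conv_nth)
    qed
  qed simp
  thus "W u v (Suc k)" unfolding walk_between_def using p pn
    by (rule_tac x="p @ [v]" in exI) auto
qed

lemma W_V: "W u v k \<Longrightarrow> u \<in> V \<and> v \<in> V"
  by (induction k arbitrary: v) (auto simp: W0 WS dest: EV2)

lemma W_app: "W u v k \<Longrightarrow> W v w l \<Longrightarrow> W u w (k + l)"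
proof (induction l arbitrary: w)
  case 0 thus ?case by (simp add: W0)
next
  case (Suc l)
  then obtain x where "W v x l" "E x w" by (auto simp: WS)
  thus ?case using Suc by (auto simp: WS)
qed

lemma W_edge: "E u v \<Longrightarrow> W u v 1"
  using WS[of u v 0] W0 EV1 by auto

lemma W_rev: "W u v k \<Longrightarrow> W v u k"
proof (induction k arbitrary: v)
  case 0 thus ?case by (auto simp add: W0)
next
  case (Suc k)
  then obtain x where x: "W u x k" "E x v" by (auto simp: WS)
  have "W v x 1" using W_edge[OF Esym[OF x(2)]] .
  from W_app[OF this Suc.IH[OF x(1)]] show ?case by simp
qed

lemma W_ex: "u \<in> V \<Longrightarrow> v \<in> V \<Longrightarrow> \<exists>k. W u v k"
  using conn unfolding connected_graph_def by auto

lemma d_walk: "u \<in> V \<Longrightarrow> v \<in> V \<Longrightarrow> W u v (d u v)"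
  unfolding gdist_def using W_ex by (metis LeastI_ex)

lemma d_le: "W u v k \<Longrightarrow> d u v \<le> k"
  unfolding gdist_def by (rule Least_le)

lemma d_refl: "u \<in> V \<Longrightarrow> d u u = 0"
  using d_le[of u u 0] W0 by auto

lemma d_0: "u \<in> V \<Longrightarrow> v \<in> V \<Longrightarrow> d u v = 0 \<Longrightarrow> u = v"
  using d_walk[of u v] W0 by auto

lemma d_sym: "u \<in> V \<Longrightarrow> v \<in> V \<Longrightarrow> d u v = d v u"
  using d_walk d_le W_rev by (metis le_antisym)

lemma d_tri: "u \<in> V \<Longrightarrow> v \<in> V \<Longrightarrow> w \<in> V \<Longrightarrow> d u w \<le> d u v + d v w"
  using d_walk d_le W_app by metis

lemma d_edge: "E u v \<Longrightarrow> d u v = 1"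
proof -
  assume e: "E u v"
  have "d u v \<le> 1" using d_le W_edge[OF e] by auto
  moreover have "d u v \<noteq> 0" using d_0 EV1[OF e] EV2[OF e] e Eirr by auto
  ultimately show ?thesis by simp
qed

lemma d_1: "u \<in> V \<Longrightarrow> v \<in> V \<Longrightarrow> d u v = 1 \<Longrightarrow> E u v"
  using d_walk[of u v] by (auto simp: WS W0)

lemma d_1_iff: "u \<in> V \<Longrightarrow> v \<in> V \<Longrightarrow> d u v = 1 \<longleftrightarrow> E u v"
  using d_1 d_edge by blast

lemma d_pred: assumes "u \<in> V" "w \<in> V" "d u w = Suc j"
  shows "\<exists>x. E x w \<and> d u x = j"
proof -
  obtain x where x: "W u x j" "E x w" using d_walk[OF assms(1,2)] assms(3) by (auto simp: WS)
  have xV: "x \<in> V" using EV1[OF x(2)] .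
  have "d u x \<le> j" using d_le[OF x(1)] .
  moreover have "d u w \<le> d u x + d x w" using d_tri assms xV by blast
  ultimately show ?thesis using x(2) d_edge[OF x(2)] assms(3) by (intro exI[of _ x]) auto
qed

lemma d_max: assumes "u \<in> V" "v \<in> V" shows "d u v \<le> 3"
proof -
  have fin: "finite {d u v | u v. u \<in> V \<and> v \<in> V}"
  proof -
    have "{d u v | u v. u \<in> V \<and> v \<in> V} = (\<lambda>(u,v). d u v) ` (V \<times> V)" by auto
    thus ?thesis using finV by simp
  qed
  have "d u v \<le> diameter V E" unfolding diameter_def
    by (rule Max_ge[OF fin]) (use assms in auto)
  thus ?thesis using diam by simp
qed

lemma ex3: "\<exists>u\<in>V. \<exists>v\<in>V. d u v = 3"
proof -
  have fin: "finite {d u v | u v. u \<in> V \<and> v \<in> V}"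
  proof -
    have "{d u v | u v. u \<in> V \<and> v \<in> V} = (\<lambda>(u,v). d u v) ` (V \<times> V)" by auto
    thus ?thesis using finV by simp
  qed
  have ne: "{d u v | u v. u \<in> V \<and> v \<in> V} \<noteq> {}" using conn unfolding connected_graph_def by blast
  have "diameter V E \<in> {d u v | u v. u \<in> V \<and> v \<in> V}" unfolding diameter_def
    by (rule Max_in[OF fin ne])
  thus ?thesis using diam by auto
qed


definition N where "N w = {x\<in>V. E w x}"
definition F where "F u = {v\<in>V. v = u \<or> d u v = 3}"
abbreviation "k \<equiv> bb 0"

lemma N_fin: "finite (N w)" unfolding N_def using finV by auto
lemma F_fin: "finite (F w)" unfolding F_def using finV by auto

lemma card_N: "w \<in> V \<Longrightarrow> card (N w) = k"
proof -
  assume w: "w \<in> V"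
  have "card {x \<in> V. E w x \<and> d w x = d w w + 1} = bb (d w w)" using cnt w by blast
  moreover have "{x \<in> V. E w x \<and> d w x = d w w + 1} = N w"
    unfolding N_def using d_refl[OF w] d_edge by auto
  ultimately show ?thesis using d_refl[OF w] by simp
qed

lemma card_a1: "E u x \<Longrightarrow> card (N x \<inter> N u) = aa 1"
proof -
  assume e: "E u x"
  have "card {y \<in> V. E x y \<and> d u y = d u x} = aa (d u x)" using cnt EV1[OF e] EV2[OF e] by blast
  moreover have "{y \<in> V. E x y \<and> d u y = d u x} = N x \<inter> N u"
    unfolding N_def using d_edge[OF e] d_1_iff EV1[OF e] by auto
  ultimately show ?thesis using d_edge[OF e] by simp
qed

lemma card_c2: "u \<in> V \<Longrightarrow> w \<in> V \<Longrightarrow> d u w = 2 \<Longrightarrow> card (N w \<inter> N u) = cc 2"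
proof -
  assume u: "u \<in> V" and w: "w \<in> V" and dw: "d u w = 2"
  have "card {y \<in> V. E w y \<and> d u y + 1 = d u w} = cc (d u w)" using cnt u w by blast
  moreover have "{y \<in> V. E w y \<and> d u y + 1 = d u w} = N w \<inter> N u"
    unfolding N_def using dw d_1_iff u by auto
  ultimately show ?thesis using dw by simp
qed

lemma card_b1: "E u x \<Longrightarrow> card {y \<in> V. E x y \<and> d u y = 2} = bb 1"
proof -
  assume e: "E u x"
  have "card {y \<in> V. E x y \<and> d u y = d u x + 1} = bb (d u x)" using cnt EV1[OF e] EV2[OF e] by blast
  thus ?thesis using d_edge[OF e] by (simp add: numeral_2_eq_2)
qed

lemma b2_pos: assumes u: "u \<in> V" and w: "w \<in> V" and dw: "d u w = 2"
  shows "\<exists>y. E w y \<and> d u y = 3"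
proof -
  obtain p q where pq: "p \<in> V" "q \<in> V" "d p q = 3" using ex3 by blast
  obtain x where x: "E x q" "d p x = 2" using d_pred[OF pq(1,2)] pq(3) by auto
  have xV: "x \<in> V" using EV1[OF x(1)] .
  have "card {y \<in> V. E x y \<and> d p y = d p x + 1} = bb (d p x)" using cnt pq(1) xV by blast
  moreover have "q \<in> {y \<in> V. E x y \<and> d p y = d p x + 1}" using x pq by auto
  moreover have "finite {y \<in> V. E x y \<and> d p y = d p x + 1}" using finV by auto
  ultimately have "bb 2 > 0" using x(2) by (metis card_gt_0_iff empty_iff)
  moreover have "card {y \<in> V. E w y \<and> d u y = d u w + 1} = bb (d u w)" using cnt u w by blast
  ultimately have "{y \<in> V. E w y \<and> d u y = d u w + 1} \<noteq> {}" using dw by (metis card.empty less_irrefl)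
  thus ?thesis using dw by auto
qed

lemma equivR: "equiv V {(u, v). u \<in> V \<and> v \<in> V \<and> (u = v \<or> d u v = 3)}"
  using antip diam unfolding antipodal_def by simp

lemma F_sym: "u \<in> V \<Longrightarrow> v \<in> F u \<Longrightarrow> u \<in> F v"
  using equivR unfolding equiv_def sym_def F_def by auto

lemma F_trans: "u \<in> V \<Longrightarrow> v \<in> F u \<Longrightarrow> w \<in> F v \<Longrightarrow> w \<in> F u"
  using equivR unfolding equiv_def trans_def F_def by blast

lemma F_self: "u \<in> V \<Longrightarrow> u \<in> F u" unfolding F_def by auto

lemma F_V: "F u \<subseteq> V" unfolding F_def by auto

lemma F_eq: "u \<in> V \<Longrightarrow> v \<in> F u \<Longrightarrow> F v = F u"
  using F_sym F_trans F_V by blast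

lemma F_d3: "u \<in> V \<Longrightarrow> v \<in> F u \<Longrightarrow> w \<in> F u \<Longrightarrow> v \<noteq> w \<Longrightarrow> d v w = 3"
proof -
  assume a: "u \<in> V" "v \<in> F u" "w \<in> F u" "v \<noteq> w"
  have "w \<in> F v" using F_eq[OF a(1,2)] a(3) by simp
  thus ?thesis using a(4) unfolding F_def by auto
qed

lemma F_noedge: "u \<in> V \<Longrightarrow> v \<in> F u \<Longrightarrow> w \<in> F u \<Longrightarrow> \<not> E v w"
  using F_d3 d_edge Eirr by fastforce

lemma nbr_unique: assumes "f \<in> V" "x1 \<in> F f" "x2 \<in> F f" "E w x1" "E w x2" shows "x1 = x2"
proof (rule ccontr)
  assume ne: "x1 \<noteq> x2"
  have "d x1 x2 = 3" using F_d3[OF assms(1-3) ne] .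
  moreover have "d x1 x2 \<le> d x1 w + d w x2"
    using d_tri EV1[OF assms(4)] EV2[OF assms(4)] EV2[OF assms(5)] by blast
  moreover have "d x1 w = 1" using d_edge[OF Esym[OF assms(4)]] .
  moreover have "d w x2 = 1" using d_edge[OF assms(5)] .
  ultimately show False by simp
qed

lemma notF_d: assumes "f \<in> V" "w \<in> V" "w \<notin> F f" shows "d f w = 1 \<or> d f w = 2"
proof -
  have "d f w \<noteq> 0" using d_0 assms F_self by blast
  moreover have "d f w \<noteq> 3" using assms unfolding F_def by auto
  ultimately show ?thesis using d_max[OF assms(1,2)] by linarith
qed

lemma nbr_exists: assumes "f \<in> V" "w \<in> V" "w \<notin> F f" shows "\<exists>x\<in>F f. E w x"
proof (cases "d f w = 1")
  case True thus ?thesis using d_1 assms F_self Esym by blast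
next
  case False
  hence "d f w = 2" using notF_d assms by blast
  then obtain y where "E w y" "d f y = 3" using b2_pos assms by blast
  thus ?thesis unfolding F_def using EV2 by blast
qed

definition nb where "nb w f = (THE x. x \<in> F f \<and> E w x)"

lemma nb: assumes "f \<in> V" "w \<in> V" "w \<notin> F f" shows "nb w f \<in> F f" "E w (nb w f)"
proof -
  have "\<exists>!x. x \<in> F f \<and> E w x" using nbr_exists[OF assms] nbr_unique[OF assms(1)] by blast
  hence "nb w f \<in> F f \<and> E w (nb w f)" unfolding nb_def by (rule theI')
  thus "nb w f \<in> F f" "E w (nb w f)" by auto
qed

lemma nb_eq: assumes "f \<in> V" "w \<in> V" "w \<notin> F f" "x \<in> F f" "E w x" shows "nb w f = x"
  using nb[OF assms(1-3)] nbr_unique[OF assms(1)] assms(4,5) by blast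

lemma F_card_le: assumes u: "u \<in> V" and z: "z \<in> V" and nz: "z \<notin> F u" shows "card (F z) \<le> card (F u)"
proof -
  have "inj_on (\<lambda>f. nb f u) (F z)"
  proof (rule inj_onI)
    fix f1 f2 assume f: "f1 \<in> F z" "f2 \<in> F z" "nb f1 u = nb f2 u"
    have nf: "f1 \<notin> F u" "f2 \<notin> F u" using f F_eq z nz F_sym F_trans u F_V by (metis subsetD)+
    have "E (nb f1 u) f1" using nb(2)[OF u _ nf(1)] f F_V Esym by blast
    moreover have "E (nb f1 u) f2" using nb(2)[OF u _ nf(2)] f F_V Esym by (metis subsetD)
    ultimately show "f1 = f2" using nbr_unique[OF z f(1,2)] by blast
  qed
  moreover have "(\<lambda>f. nb f u) ` F z \<subseteq> F u"
  proof
    fix x assume "x \<in> (\<lambda>f. nb f u) ` F z"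
    then obtain f where f: "f \<in> F z" "x = nb f u" by auto
    have nf: "f \<notin> F u" using f F_eq z nz F_sym F_trans u F_V by (metis subsetD)
    show "x \<in> F u" using nb(1)[OF u _ nf] f F_V by blast
  qed
  ultimately show ?thesis using card_inj_on_le F_fin by blast
qed

lemma F_card_eq: "u \<in> V \<Longrightarrow> z \<in> V \<Longrightarrow> card (F z) = card (F u)"
proof -
  assume u: "u \<in> V" and z: "z \<in> V"
  show ?thesis
  proof (cases "z \<in> F u")
    case True thus ?thesis using F_eq u by simp
  next
    case False
    have "u \<notin> F z" using False F_sym z u by blast
    thus ?thesis using F_card_le[OF u z False] F_card_le[OF z u] u by simp
  qed
qed

lemma F_card_ge2: "u \<in> V \<Longrightarrow> card (F u) \<ge> 2"
proof -
  assume u: "u \<in> V"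
  obtain p q where pq: "p \<in> V" "q \<in> V" "d p q = 3" using ex3 by blast
  have "p \<noteq> q" using pq d_refl by auto
  hence "{p, q} \<subseteq> F p" using pq unfolding F_def by auto
  hence "card {p,q} \<le> card (F p)" using F_fin card_mono by blast
  hence "card (F p) \<ge> 2" using \<open>p \<noteq> q\<close> by simp
  thus ?thesis using F_card_eq[OF u pq(1)] by simp
qed


end



lemma dcount: "finite A \<Longrightarrow> finite B \<Longrightarrow>
  (\<Sum>x\<in>A. card {y\<in>B. R x y}) = (\<Sum>y\<in>B. card {x\<in>A. R x y})"
proof -
  assume fA: "finite A" and fB: "finite B"
  have "(\<Sum>x\<in>A. card {y\<in>B. R x y}) = (\<Sum>x\<in>A. \<Sum>y\<in>B. if R x y then 1 else 0)"
    using fB by (simp add: sum.inter_filter[symmetric])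
  also have "\<dots> = (\<Sum>y\<in>B. \<Sum>x\<in>A. if R x y then 1 else 0)" by (rule sum.swap)
  also have "\<dots> = (\<Sum>y\<in>B. card {x\<in>A. R x y})"
    using fA by (simp add: sum.inter_filter[symmetric])
  finally show ?thesis .
qed

context adrg begin

lemma antipode: "u \<in> V \<Longrightarrow> \<exists>u'. u' \<in> F u \<and> u' \<noteq> u"
proof -
  assume u: "u \<in> V"
  have "card (F u) \<ge> 2" using F_card_ge2[OF u] .
  moreover have "F u \<subseteq> {u} \<Longrightarrow> card (F u) \<le> 1"
    using card_mono[of "{u}" "F u"] by simp
  ultimately have "\<not> F u \<subseteq> {u}" by linarith
  thus ?thesis by blast
qed

lemma antipode_d: "u \<in> V \<Longrightarrow> u' \<in> F u \<Longrightarrow> u' \<noteq> u \<Longrightarrow> d u u' = 3"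
  unfolding F_def by auto

lemma nbr_antipode_d2: assumes u: "u \<in> V" and u': "u' \<in> F u" "u' \<noteq> u" and w: "E u' w"
  shows "d u w = 2"
proof -
  have wV: "w \<in> V" using EV2[OF w] .
  have u'V: "u' \<in> V" using u' F_V by blast
  have "w \<notin> F u" using F_noedge[OF u u'(1)] w by blast
  hence "d u w = 1 \<or> d u w = 2" using notF_d u wV by blast
  moreover have "d u u' \<le> d u w + d w u'" using d_tri u wV u'V by blast
  moreover have "d w u' = 1" using d_edge[OF Esym[OF w]] .
  ultimately show ?thesis using antipode_d[OF u u'] by linarith
qed

lemma k_pos: "u \<in> V \<Longrightarrow> k \<ge> 1"
proof -
  assume u: "u \<in> V"
  obtain u' where u': "u' \<in> F u" "u' \<noteq> u" using antipode[OF u] by blast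
  have u'V: "u' \<in> V" using u' F_V by blast
  obtain x where "E x u'" using d_pred[OF u u'V] antipode_d[OF u u'] by auto
  hence "x \<in> N u'" unfolding N_def using EV1 Esym by blast
  hence "card (N u') \<noteq> 0" using N_fin by auto
  thus ?thesis using card_N[OF u'V] by simp
qed

lemma ab_sum: assumes e: "E u x" shows "1 + aa 1 + bb 1 \<le> k"
proof -
  have uV: "u \<in> V" and xV: "x \<in> V" using EV1[OF e] EV2[OF e] by auto
  define B where "B = {y \<in> V. E x y \<and> d u y = 2}"
  have "insert u ((N x \<inter> N u) \<union> B) \<subseteq> N x"
    unfolding B_def N_def using Esym[OF e] uV by auto
  hence "card (insert u ((N x \<inter> N u) \<union> B)) \<le> k" using card_mono N_fin card_N[OF xV] by metis
  moreover have "u \<notin> (N x \<inter> N u) \<union> B" unfolding B_def N_def using d_refl[OF uV] Eirr by auto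
  moreover have "(N x \<inter> N u) \<inter> B = {}" unfolding B_def N_def using d_edge by fastforce
  moreover have "finite B" unfolding B_def using finV by auto
  ultimately have "1 + (card (N x \<inter> N u) + card B) \<le> k"
    using N_fin by (simp add: card_Un_disjoint)
  thus ?thesis using card_a1[OF e] card_b1[OF e] unfolding B_def by simp
qed

lemma G2_count: assumes u: "u \<in> V"
  shows "k * bb 1 = card {w\<in>V. d u w = 2} * cc 2"
proof -
  define G2 where "G2 = {w\<in>V. d u w = 2}"
  have fG: "finite G2" unfolding G2_def using finV by auto
  have "(\<Sum>x\<in>N u. card {w\<in>G2. E x w}) = (\<Sum>w\<in>G2. card {x\<in>N u. E x w})"
    by (rule dcount[OF N_fin fG])
  moreover have "(\<Sum>x\<in>N u. card {w\<in>G2. E x w}) = (\<Sum>x\<in>N u. bb 1)"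
  proof (rule sum.cong)
    fix x assume "x \<in> N u"
    hence e: "E u x" unfolding N_def by auto
    have "{w\<in>G2. E x w} = {y \<in> V. E x y \<and> d u y = 2}" unfolding G2_def by auto
    thus "card {w\<in>G2. E x w} = bb 1" using card_b1[OF e] by simp
  qed simp
  moreover have "(\<Sum>w\<in>G2. card {x\<in>N u. E x w}) = (\<Sum>w\<in>G2. cc 2)"
  proof (rule sum.cong)
    fix w assume w: "w \<in> G2"
    have "{x\<in>N u. E x w} = N w \<inter> N u" unfolding N_def using Esym EV1 by blast
    thus "card {x\<in>N u. E x w} = cc 2" using card_c2[OF u] w unfolding G2_def by auto
  qed simp
  ultimately show ?thesis using card_N[OF u] unfolding G2_def by (simp add: mult.commute)
qed

lemma G2_big: assumes u: "u \<in> V"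
  shows "(card (F u) - 1) * k \<le> card {w\<in>V. d u w = 2}"
proof -
  define A where "A = F u - {u}"
  have fA: "finite A" unfolding A_def using F_fin by auto
  have cA: "card A = card (F u) - 1" unfolding A_def using F_self[OF u] F_fin by simp
  have sub: "(\<Union>u'\<in>A. N u') \<subseteq> {w\<in>V. d u w = 2}"
  proof
    fix w assume "w \<in> (\<Union>u'\<in>A. N u')"
    then obtain u' where "u' \<in> A" "w \<in> N u'" by auto
    thus "w \<in> {w\<in>V. d u w = 2}" using nbr_antipode_d2[OF u] unfolding A_def N_def by auto
  qed
  have "card (\<Union>u'\<in>A. N u') = (\<Sum>u'\<in>A. card (N u'))"
  proof (rule card_UN_disjoint[OF fA])
    show "\<forall>i\<in>A. finite (N i)" using N_fin by auto
    show "\<forall>i\<in>A. \<forall>j\<in>A. i \<noteq> j \<longrightarrow> N i \<inter> N j = {}"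
    proof (intro ballI impI)
      fix i j assume ij: "i \<in> A" "j \<in> A" "i \<noteq> j"
      show "N i \<inter> N j = {}"
      proof (rule ccontr)
        assume "N i \<inter> N j \<noteq> {}"
        then obtain x where "E i x" "E j x" unfolding N_def by auto
        hence "i = j" using nbr_unique[OF u, of i j x] ij Esym unfolding A_def by blast
        thus False using ij by simp
      qed
    qed
  qed
  also have "\<dots> = card A * k"
  proof -
    have "\<forall>u'\<in>A. card (N u') = k" using card_N F_V unfolding A_def by blast
    thus ?thesis by simp
  qed
  finally have "card (\<Union>u'\<in>A. N u') = card A * k" .
  moreover have "card (\<Union>u'\<in>A. N u') \<le> card {w\<in>V. d u w = 2}"
    using card_mono[OF _ sub] finV by auto
  ultimately show ?thesis using cA by simp
qed

lemma c_b1: assumes u: "u \<in> V" shows "(card (F u) - 1) * cc 2 \<le> bb 1"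
proof -
  have "k * ((card (F u) - 1) * cc 2) \<le> k * bb 1"
  proof -
    have "k * ((card (F u) - 1) * cc 2) = ((card (F u) - 1) * k) * cc 2" by simp
    also have "\<dots> \<le> card {w\<in>V. d u w = 2} * cc 2" using G2_big[OF u] by (rule mult_le_mono1)
    also have "\<dots> = k * bb 1" using G2_count[OF u] by simp
    finally show ?thesis .
  qed
  thus ?thesis using k_pos[OF u] by simp
qed

lemma c_lower: assumes u: "u \<in> V" shows "2 * aa 1 + 3 \<le> cc 2 + k"
proof -
  obtain u' where u': "u' \<in> F u" "u' \<noteq> u" using antipode[OF u] by blast
  have u'V: "u' \<in> V" using u' F_V by blast
  obtain w where "E w u'" using d_pred[OF u u'V] antipode_d[OF u u'] by auto
  hence ew: "E u' w" by (rule Esym)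
  have wV: "w \<in> V" using EV2[OF ew] .
  have dw: "d u w = 2" using nbr_antipode_d2[OF u u' ew] .
  obtain y where y: "E y w" "d u y = 1" using d_pred[OF u wV] dw by auto
  have yV: "y \<in> V" using EV1[OF y(1)] .
  have euy: "E u y" using d_1[OF u yV y(2)] .
  have ewy: "E w y" using Esym[OF y(1)] .
  define Au where "Au = N y \<inter> N u"
  define Aw where "Aw = N y \<inter> N w"
  have cAu: "card Au = aa 1" unfolding Au_def using card_a1[OF euy] .
  have cAw: "card Aw = aa 1" unfolding Aw_def using card_a1[OF ewy] .
  have uw: "u \<noteq> w" using dw d_refl[OF u] by auto
  have "\<not> E u w" using dw d_edge by force
  hence "Au \<union> Aw \<subseteq> N y - {u, w}"
    unfolding Au_def Aw_def N_def using Eirr Esym by blast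
  moreover have "{u, w} \<subseteq> N y" unfolding N_def using euy ewy u wV Esym by auto
  moreover have "card (N y - {u, w}) = k - 2"
    using card_N[OF yV] N_fin uw \<open>{u, w} \<subseteq> N y\<close> by (simp add: card_Diff_subset)
  ultimately have "card (Au \<union> Aw) \<le> k - 2"
    using N_fin card_mono[of "N y - {u, w}" "Au \<union> Aw"] by simp
  moreover have "card (Au \<union> Aw) + card (Au \<inter> Aw) = card Au + card Aw"
    using card_Un_Int[of Au Aw] by (simp add: Au_def Aw_def N_fin)
  moreover have "insert y (Au \<inter> Aw) \<subseteq> N w \<inter> N u"
    unfolding Au_def Aw_def N_def using euy ewy yV by auto
  moreover have "y \<notin> Au \<inter> Aw" unfolding Au_def N_def using Eirr by auto
  moreover have "finite (Au \<inter> Aw)" unfolding Au_def using N_fin by auto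
  ultimately have "1 + card (Au \<inter> Aw) \<le> cc 2" and "card (Au \<inter> Aw) + (k - 2) \<ge> 2 * aa 1"
    using card_c2[OF u wV dw] cAu cAw card_mono[of "N w \<inter> N u" "insert y (Au \<inter> Aw)"] N_fin
    by auto
  moreover have "k \<ge> 2" using \<open>{u, w} \<subseteq> N y\<close> card_N[OF yV] N_fin[of y] uw
    card_mono[of "N y" "{u,w}"] by simp
  ultimately show ?thesis by linarith
qed

lemma a1_bound: assumes u: "u \<in> V" shows "13 * aa 1 \<le> 12 * (k + 1)"
proof -
  obtain x where "E u x"
  proof -
    obtain u' where u': "u' \<in> F u" "u' \<noteq> u" using antipode[OF u] by blast
    have u'V: "u' \<in> V" using u' F_V by blast
    have "d u' u = 3" using d_sym[OF u u'V] antipode_d[OF u u'] by simp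
    hence "d u' u = Suc 2" by simp
    then obtain y where "E y u" using d_pred[OF u'V u] by blast
    thus ?thesis using that Esym by blast
  qed
  hence "1 + aa 1 + bb 1 \<le> k" by (rule ab_sum)
  moreover have "(card (F u) - 1) * cc 2 \<le> bb 1" using c_b1[OF u] .
  moreover have "card (F u) - 1 \<ge> 1" using F_card_ge2[OF u] by simp
  moreover have "2 * aa 1 + 3 \<le> cc 2 + k" using c_lower[OF u] .
  ultimately have "cc 2 \<le> bb 1" using mult_le_mono1[of 1 "card (F u) - 1" "cc 2"] by linarith
  hence "3 * aa 1 + 4 \<le> 2 * k" using \<open>1 + aa 1 + bb 1 \<le> k\<close> c_lower[OF u] by linarith
  hence "13 * aa 1 \<le> 12 * k + 12" by linarith
  thus ?thesis by simp
qed

end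



context adrg begin

lemma has_nbr: "u \<in> V \<Longrightarrow> \<exists>x. E u x"
proof -
  assume u: "u \<in> V"
  obtain u' where u': "u' \<in> F u" "u' \<noteq> u" using antipode[OF u] by blast
  have u'V: "u' \<in> V" using u' F_V by blast
  have "d u' u = 3" using d_sym[OF u u'V] antipode_d[OF u u'] by simp
  hence "d u' u = Suc 2" by simp
  then obtain y where "E y u" using d_pred[OF u'V u] by blast
  thus ?thesis using Esym by blast
qed

lemma F2: assumes "card (F z) = 2" "z \<in> V" "p \<in> F z" "q \<in> F z" "p \<noteq> z" "q \<noteq> z" shows "p = q"
proof (rule ccontr)
  assume "p \<noteq> q"
  hence "card {z, p, q} = 3" using assms by auto
  moreover have "{z,p,q} \<subseteq> F z" using assms F_self by auto
  ultimately have "3 \<le> card (F z)" using card_mono F_fin by metis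
  thus False using assms by simp
qed

lemma nbrs_notF: assumes "E u x" "E u z" "x \<noteq> z" shows "x \<notin> F z"
proof
  assume "x \<in> F z"
  moreover have "z \<in> F z" using F_self EV2[OF assms(2)] .
  ultimately have "x = z" using nbr_unique[OF EV2[OF assms(2)]] assms by blast
  thus False using assms by simp
qed

lemma a1_r2: assumes u: "u \<in> V" and r2: "card (F u) = 2" and a1: "aa 1 \<ge> 1"
  shows "k + 1 \<le> 3 * aa 1"
proof -
  obtain x where ux: "E u x" using has_nbr[OF u] by blast
  have "card (N x \<inter> N u) \<ge> 1" using card_a1[OF ux] a1 by simp
  hence "N x \<inter> N u \<noteq> {}" by (metis card.empty not_one_le_zero)
  then obtain y where "y \<in> N x \<inter> N u" by blast
  hence xy: "E x y" and uy: "E u y" unfolding N_def by auto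
  define S where "S = (N x \<inter> N u) \<union> (N y \<inter> N u)"
  define Z where "Z = N u - S"
  have "card S \<le> aa 1 + aa 1" unfolding S_def
    using card_Un_le[of "N x \<inter> N u" "N y \<inter> N u"] card_a1[OF ux] card_a1[OF uy] by simp
  moreover have "S \<subseteq> N u" unfolding S_def by auto
  hence "card Z = k - card S" unfolding Z_def
    using card_Diff_subset[of S "N u"] card_N[OF u] N_fin finite_subset by metis
  ultimately have cZ: "k \<le> card Z + 2 * aa 1" by linarith
  define phi where "phi z = nb x z" for z
  have Zprop: "E u z \<and> \<not> E x z \<and> \<not> E y z \<and> z \<noteq> x \<and> z \<noteq> y" if z: "z \<in> Z" for z
  proof -
    have "E y x" using Esym[OF xy] .
    thus ?thesis using z unfolding Z_def S_def N_def using ux uy xy by auto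
  qed
  have xV: "x \<in> V" and yV: "y \<in> V" using EV2 ux uy by auto
  have main: "phi z \<in> N y \<inter> N x \<and> phi z \<noteq> u \<and> phi z \<in> F z" if z: "z \<in> Z" for z
  proof -
    have zp: "E u z" "\<not> E x z" "\<not> E y z" "z \<noteq> x" "z \<noteq> y" using Zprop[OF z] by auto
    have zV: "z \<in> V" using EV2[OF zp(1)] .
    have xz: "x \<notin> F z" using nbrs_notF[OF ux zp(1)] zp by auto
    have yz: "y \<notin> F z" using nbrs_notF[OF uy zp(1)] zp by auto
    have p: "phi z \<in> F z" "E x (phi z)" using nb[OF zV xV xz] unfolding phi_def by auto
    have q: "nb y z \<in> F z" "E y (nb y z)" using nb[OF zV yV yz] by auto
    have "card (F z) = 2" using F_card_eq[OF u zV] r2 by simp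
    moreover have "phi z \<noteq> z" using p zp by auto
    moreover have "nb y z \<noteq> z" using q zp by auto
    ultimately have "phi z = nb y z" using F2[OF _ zV p(1) q(1)] by blast
    hence "E y (phi z)" using q by simp
    moreover have "phi z \<noteq> u"
    proof
      assume "phi z = u"
      hence "u \<in> F z" using p by simp
      hence "z \<in> F u" using F_sym zV by blast
      thus False using F_noedge[OF u F_self[OF u]] zp(1) by blast
    qed
    ultimately show ?thesis using p EV2 unfolding N_def by auto
  qed
  have inj: "inj_on phi Z"
  proof (rule inj_onI)
    fix z1 z2 assume z: "z1 \<in> Z" "z2 \<in> Z" "phi z1 = phi z2"
    have z1V: "z1 \<in> V" using Zprop[OF z(1)] EV2 by blast
    have z2V: "z2 \<in> V" using Zprop[OF z(2)] EV2 by blast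
    have "phi z1 \<in> F z2" using main[OF z(2)] z(3) by simp
    hence "F (phi z1) = F z2" using F_eq z2V by blast
    moreover have "F (phi z1) = F z1" using F_eq z1V main[OF z(1)] by blast
    ultimately have "z1 \<in> F z2" using F_self[OF z1V] by simp
    moreover have "E u z1" "E u z2" using Zprop z by auto
    ultimately show "z1 = z2" using nbr_unique[OF z2V _ F_self[OF z2V], of z1 u] by blast
  qed
  have "insert u (phi ` Z) \<subseteq> N y \<inter> N x" using main ux uy u Esym unfolding N_def by auto
  moreover have "u \<notin> phi ` Z" using main by auto
  moreover have "finite Z" unfolding Z_def using N_fin by auto
  ultimately have "1 + card Z \<le> card (N y \<inter> N x)"
    using card_mono[of "N y \<inter> N x" "insert u (phi ` Z)"] N_fin card_image[OF inj] by auto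
  moreover have "card (N y \<inter> N x) = aa 1" using card_a1[OF xy] .
  ultimately show ?thesis using cZ by linarith
qed

end



context adrg begin

lemma indep: assumes a0: "aa 1 = 0" and x: "E u x" and y: "E u y" shows "\<not> E x y"
proof
  assume "E x y"
  hence "y \<in> N x \<inter> N u" using x y EV2 unfolding N_def by auto
  hence "card (N x \<inter> N u) \<noteq> 0" using N_fin by auto
  thus False using card_a1[OF x] a0 by simp
qed

lemma crown: assumes u0: "u0 \<in> V" and r2: "card (F u0) = 2" and a0: "aa 1 = 0"
  shows "cocktail_party V E"
proof -
  obtain u1 where u1: "u1 \<in> F u0" "u1 \<noteq> u0" using antipode[OF u0] by blast
  have u1V: "u1 \<in> V" using u1 F_V by blast
  have Fu0: "F u0 = {u0, u1}"
  proof -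
    have "{u0,u1} \<subseteq> F u0" using u1 F_self[OF u0] by auto
    moreover have "card {u0,u1} = 2" using u1 by auto
    ultimately show ?thesis using r2 F_fin card_subset_eq by metis
  qed
  have Fu1: "F u1 = {u0, u1}" using F_eq[OF u0 u1(1)] Fu0 by simp
  have r2all: "\<And>z. z \<in> V \<Longrightarrow> card (F z) = 2" using F_card_eq[OF u0] r2 by simp
  define A where "A = insert u0 (N u1)"
  define B where "B = insert u1 (N u0)"
  define sg where "sg x = (if x = u0 then u1 else nb u0 x)" for x
  define tg where "tg y = (if y = u1 then u0 else nb u1 y)" for y
  have u0N0: "u0 \<notin> N u0" and u1N1: "u1 \<notin> N u1" unfolding N_def using Eirr by auto
  have u0N1: "u0 \<notin> N u1" and u1N0: "u1 \<notin> N u0"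
    unfolding N_def using F_noedge[OF u0 u1(1) F_self[OF u0]] F_noedge[OF u0 F_self[OF u0] u1(1)] by auto
  have N01: "N u0 \<inter> N u1 = {}"
  proof (rule ccontr)
    assume "N u0 \<inter> N u1 \<noteq> {}"
    then obtain x where "E u0 x" "E u1 x" unfolding N_def by auto
    thus False using nbr_unique[OF u0 F_self[OF u0] u1(1), of x] Esym u1(2) by blast
  qed
  have notF0: "x \<notin> F u0" if "x \<in> N u0 \<union> N u1" for x
    using that Fu0 u0N0 u1N1 u0N1 u1N0 by auto
  have cover: "V = {u0,u1} \<union> N u0 \<union> N u1"
  proof
    show "{u0, u1} \<union> N u0 \<union> N u1 \<subseteq> V" using u0 u1V unfolding N_def by auto
    show "V \<subseteq> {u0, u1} \<union> N u0 \<union> N u1"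
    proof
      fix w assume w: "w \<in> V"
      show "w \<in> {u0, u1} \<union> N u0 \<union> N u1"
      proof (cases "w \<in> F u0")
        case True thus ?thesis using Fu0 by auto
      next
        case False
        have "nb w u0 \<in> {u0,u1}" "E w (nb w u0)" using nb[OF u0 w False] Fu0 by auto
        thus ?thesis using Esym w unfolding N_def by auto
      qed
    qed
  qed
  have sgN: "sg x \<in> N u0 \<and> sg x \<in> F x \<and> x \<noteq> sg x" if x: "x \<in> N u1" for x
  proof -
    have xV: "x \<in> V" using x unfolding N_def by auto
    have "x \<noteq> u0" using x u0N1 by auto
    hence s: "sg x = nb u0 x" unfolding sg_def by simp
    have "x \<notin> F u0" using notF0 x by auto
    hence "u0 \<notin> F x" using F_sym xV by blast
    hence "nb u0 x \<in> F x" "E u0 (nb u0 x)" using nb[OF xV u0] by auto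
    moreover have "x \<notin> N u0" using x N01 by auto
    ultimately show ?thesis using s EV2 unfolding N_def by auto
  qed
  have tgN: "tg y \<in> N u1 \<and> tg y \<in> F y" if y: "y \<in> N u0" for y
  proof -
    have yV: "y \<in> V" using y unfolding N_def by auto
    have "y \<noteq> u1" using y u1N0 by auto
    hence s: "tg y = nb u1 y" unfolding tg_def by simp
    have "y \<notin> F u0" using notF0 y by auto
    hence "u1 \<notin> F y" using F_sym[OF yV, of u1] Fu0 Fu1 by auto
    hence "nb u1 y \<in> F y" "E u1 (nb u1 y)" using nb[OF yV u1V] by auto
    thus ?thesis using s EV2 unfolding N_def by auto
  qed
  have ts: "tg (sg x) = x" if x: "x \<in> A" for x
  proof (cases "x = u0")
    case True thus ?thesis unfolding sg_def tg_def by simp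
  next
    case False
    hence xN: "x \<in> N u1" using x unfolding A_def by auto
    have xV: "x \<in> V" using xN unfolding N_def by auto
    have sN: "sg x \<in> N u0" "sg x \<in> F x" using sgN[OF xN] by auto
    have sV: "sg x \<in> V" using sN unfolding N_def by auto
    have "sg x \<noteq> u1" using sN u1N0 by auto
    hence "tg (sg x) = nb u1 (sg x)" unfolding tg_def by simp
    also have "\<dots> = x"
    proof (rule nb_eq[OF sV u1V])
      show "u1 \<notin> F (sg x)" using F_sym[OF sV, of u1] Fu0 Fu1 notF0[of "sg x"] sN(1) by auto
      show "x \<in> F (sg x)" using F_sym[OF xV sN(2)] .
      show "E u1 x" using xN unfolding N_def by auto
    qed
    finally show ?thesis .
  qed
  have st: "sg (tg y) = y" if y: "y \<in> B" for y
  proof (cases "y = u1")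
    case True thus ?thesis unfolding sg_def tg_def using u1 by simp
  next
    case False
    hence yN: "y \<in> N u0" using y unfolding B_def by auto
    have yV: "y \<in> V" using yN unfolding N_def by auto
    have tN: "tg y \<in> N u1" "tg y \<in> F y" using tgN[OF yN] by auto
    have tV: "tg y \<in> V" using tN unfolding N_def by auto
    have "tg y \<noteq> u0" using tN u0N1 by auto
    hence "sg (tg y) = nb u0 (tg y)" unfolding sg_def by simp
    also have "\<dots> = y"
    proof (rule nb_eq[OF tV u0])
      show "u0 \<notin> F (tg y)" using F_sym[OF tV, of u0] notF0[of "tg y"] tN(1) by auto
      show "y \<in> F (tg y)" using F_sym[OF yV tN(2)] .
      show "E u0 y" using yN unfolding N_def by auto
    qed
    finally show ?thesis .
  qed
  have sgAB: "sg ` A \<subseteq> B"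
  proof
    fix z assume "z \<in> sg ` A"
    then obtain x where x: "x \<in> A" "z = sg x" by auto
    show "z \<in> B"
    proof (cases "x = u0")
      case True thus ?thesis using x unfolding sg_def B_def by simp
    next
      case False thus ?thesis using x sgN unfolding A_def B_def by auto
    qed
  qed
  have tgBA: "tg ` B \<subseteq> A"
  proof
    fix z assume "z \<in> tg ` B"
    then obtain y where y: "y \<in> B" "z = tg y" by auto
    show "z \<in> A"
    proof (cases "y = u1")
      case True thus ?thesis using y unfolding tg_def A_def by simp
    next
      case False thus ?thesis using y tgN unfolding A_def B_def by auto
    qed
  qed
  have bij: "bij_betw sg A B"
    by (rule bij_betw_byWitness[where f'=tg]) (use ts st sgAB tgBA in auto)
  have AB: "A \<inter> B = {}" unfolding A_def B_def using u1 N01 u0N0 u1N1 u0N1 u1N0 by auto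
  have AuB: "A \<union> B = V" unfolding A_def B_def using cover by auto
  have indA: "\<not> E x y" if "x \<in> A" "y \<in> A" for x y
  proof -
    have "x \<in> N u1 \<or> x = u0" "y \<in> N u1 \<or> y = u0" using that unfolding A_def by auto
    moreover have "\<not> E u0 z" if "z \<in> N u1" for z using that u0N1 N01 u0 unfolding N_def by auto
    moreover have "\<not> E z u0" if "z \<in> N u1" for z using that u0N1 N01 Esym u0 unfolding N_def by blast
    ultimately show ?thesis using indep[OF a0, of u1 x y] Eirr[of u0] unfolding N_def by blast
  qed
  have indB: "\<not> E x y" if "x \<in> B" "y \<in> B" for x y
  proof -
    have "x \<in> N u0 \<or> x = u1" "y \<in> N u0 \<or> y = u1" using that unfolding B_def by auto
    moreover have "\<not> E u1 z" if "z \<in> N u0" for z using that u1N0 N01 u1V unfolding N_def by auto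
    moreover have "\<not> E z u1" if "z \<in> N u0" for z using that u1N0 N01 Esym u1V unfolding N_def by blast
    ultimately show ?thesis using indep[OF a0, of u0 x y] Eirr[of u1] unfolding N_def by blast
  qed
  have P: "E x y \<longleftrightarrow> y \<noteq> sg x" if x: "x \<in> A" and y: "y \<in> B" for x y
  proof (cases "x = u0")
    case True
    hence "sg x = u1" unfolding sg_def by simp
    show ?thesis
    proof (cases "y = u1")
      case True2: True
      thus ?thesis using \<open>sg x = u1\<close> True u1N0 u0 u1V unfolding N_def by auto
    next
      case False
      hence "y \<in> N u0" using y unfolding B_def by auto
      thus ?thesis using \<open>sg x = u1\<close> True False unfolding N_def by auto
    qed
  next
    case False
    hence xN: "x \<in> N u1" using x unfolding A_def by auto
    have xV: "x \<in> V" using xN unfolding N_def by auto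
    have sx: "sg x \<in> N u0" "sg x \<in> F x" "x \<noteq> sg x" using sgN[OF xN] by auto
    show ?thesis
    proof (cases "y = u1")
      case True
      thus ?thesis using xN sx u1N0 Esym unfolding N_def by auto
    next
      case False
      hence yN: "y \<in> N u0" using y unfolding B_def by auto
      have yV: "y \<in> V" using yN unfolding N_def by auto
      have Fx: "F x = {x, sg x}"
      proof -
        have "{x, sg x} \<subseteq> F x" using sx F_self[OF xV] by auto
        moreover have "card {x, sg x} = 2" using sx by auto
        ultimately show ?thesis using r2all[OF xV] F_fin card_subset_eq by metis
      qed
      show ?thesis
      proof
        assume e: "E x y"
        show "y \<noteq> sg x"
        proof
          assume "y = sg x"
          thus False using F_noedge[OF xV F_self[OF xV] sx(2)] e by simp
        qed
      next
        assume ne: "y \<noteq> sg x"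
        have "y \<noteq> x" using yN xN N01 by auto
        hence yF: "y \<notin> F x" using Fx ne by auto
        have n: "nb y x \<in> F x" "E y (nb y x)" using nb[OF xV yV yF] by auto
        have "nb y x \<noteq> sg x"
        proof
          assume "nb y x = sg x"
          hence "E y (sg x)" using n by simp
          thus False using indep[OF a0, of u0 y "sg x"] yN sx unfolding N_def by auto
        qed
        hence "nb y x = x" using n Fx by auto
        thus "E x y" using n Esym by metis
      qed
    qed
  qed
  show ?thesis unfolding cocktail_party_def
  proof (intro exI conjI allI)
    show "A \<inter> B = {}" by (rule AB)
    show "A \<union> B = V" by (rule AuB)
    show "bij_betw sg A B" by (rule bij)
    fix x y
    show "E x y = (x \<in> A \<and> y \<in> B \<and> y \<noteq> sg x \<or> y \<in> A \<and> x \<in> B \<and> x \<noteq> sg y)"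
    proof
      assume e: "E x y"
      have "x \<in> A \<union> B" "y \<in> A \<union> B" using AuB EV1[OF e] EV2[OF e] by auto
      have e': "E y x" using Esym[OF e] .
      show "x \<in> A \<and> y \<in> B \<and> y \<noteq> sg x \<or> y \<in> A \<and> x \<in> B \<and> x \<noteq> sg y"
      proof (cases "x \<in> A")
        case True
        hence "y \<notin> A" using indA e by blast
        hence "y \<in> B" using \<open>y \<in> A \<union> B\<close> by auto
        thus ?thesis using P[OF True] e True by blast
      next
        case False
        hence xB: "x \<in> B" using \<open>x \<in> A \<union> B\<close> by auto
        hence "y \<notin> B" using indB e by blast
        hence "y \<in> A" using \<open>y \<in> A \<union> B\<close> by auto
        thus ?thesis using P[OF _ xB] e' xB by blast
      qed
    next
      assume "x \<in> A \<and> y \<in> B \<and> y \<noteq> sg x \<or> y \<in> A \<and> x \<in> B \<and> x \<noteq> sg y"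
      thus "E x y"
      proof
        assume "x \<in> A \<and> y \<in> B \<and> y \<noteq> sg x" thus "E x y" using P by blast
      next
        assume "y \<in> A \<and> x \<in> B \<and> x \<noteq> sg y"
        hence "E y x" using P by blast
        thus "E x y" by (rule Esym)
      qed
    qed
  qed
qed

end



context adrg begin

lemma c_bound: assumes u: "u \<in> V" and nc: "\<not> cocktail_party V E"
  shows "13 * cc 2 \<le> 12 * (k + 1)"
proof -
  obtain x where ux: "E u x" using has_nbr[OF u] by blast
  have s: "1 + aa 1 + bb 1 \<le> k" using ab_sum[OF ux] .
  have cb: "(card (F u) - 1) * cc 2 \<le> bb 1" using c_b1[OF u] .
  have r: "card (F u) \<ge> 2" using F_card_ge2[OF u] .
  show ?thesis
  proof (cases "card (F u) \<ge> 3")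
    case True
    hence "2 * cc 2 \<le> (card (F u) - 1) * cc 2" by (intro mult_le_mono1) simp
    hence "2 * cc 2 \<le> bb 1" using cb by linarith
    hence "13 * cc 2 \<le> 12 * k + 12" using s by linarith
    thus ?thesis by simp
  next
    case False
    hence r2: "card (F u) = 2" using r by simp
    hence "cc 2 \<le> bb 1" using cb by simp
    show ?thesis
    proof (cases "aa 1 = 0")
      case True
      thus ?thesis using crown[OF u r2 True] nc by simp
    next
      case False
      hence "k + 1 \<le> 3 * aa 1" using a1_r2[OF u r2] by simp
      hence "13 * cc 2 \<le> 12 * k + 12" using s \<open>cc 2 \<le> bb 1\<close> by linarith
      thus ?thesis by simp
    qed
  qed
qed

lemma walk_map: assumes fV: "\<And>v. v \<in> V \<Longrightarrow> f v \<in> V" and fE: "\<And>u v. E u v \<Longrightarrow> E (f u) (f v)"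
  shows "W u v n \<Longrightarrow> W (f u) (f v) n"
proof (induction n arbitrary: v)
  case 0 thus ?case using fV by (auto simp: W0)
next
  case (Suc n)
  then obtain x where x: "W u x n" "E x v" by (auto simp: WS)
  have "W (f u) (f x) n" using Suc.IH[OF x(1)] .
  moreover have "E (f x) (f v)" using fE[OF x(2)] .
  ultimately show ?case unfolding WS by blast
qed

lemma aut_d: assumes aut: "automorphism V E s" and u: "u \<in> V" and v: "v \<in> V"
  shows "d (s u) (s v) = d u v"
proof -
  have bij: "bij_betw s V V" and ed: "\<forall>u\<in>V. \<forall>v\<in>V. E u v \<longleftrightarrow> E (s u) (s v)"
    using aut[unfolded automorphism_def] by (rule conjunct1, rule conjunct2)
  have sV: "\<And>v. v \<in> V \<Longrightarrow> s v \<in> V" using bij_betw_apply[OF bij] .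
  define t where "t = inv_into V s"
  have ts: "\<And>v. v \<in> V \<Longrightarrow> t (s v) = v" unfolding t_def using bij_betw_inv_into_left[OF bij] .
  have st: "\<And>v. v \<in> V \<Longrightarrow> s (t v) = v" unfolding t_def using bij_betw_inv_into_right[OF bij] .
  have tV: "\<And>v. v \<in> V \<Longrightarrow> t v \<in> V" unfolding t_def using inv_into_into[of _ s V] bij
    unfolding bij_betw_def by simp
  have sE: "E (s a) (s b)" if e: "E a b" for a b
  proof -
    have "E a b = E (s a) (s b)" using ed EV1[OF e] EV2[OF e] by blast
    thus ?thesis using e by blast
  qed
  have tE: "E (t a) (t b)" if e: "E a b" for a b
  proof -
    have ta: "t a \<in> V" "t b \<in> V" using tV EV1[OF e] EV2[OF e] by auto
    have "E (s (t a)) (s (t b))" using e st[OF EV1[OF e]] st[OF EV2[OF e]] by simp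
    moreover have "E (t a) (t b) = E (s (t a)) (s (t b))" using ed ta by blast
    ultimately show ?thesis by blast
  qed
  have suV: "s u \<in> V" "s v \<in> V" using sV u v by auto
  have w1: "W (s u) (s v) (d u v)" using walk_map[of s, OF sV sE d_walk[OF u v]] .
  have w2: "W (t (s u)) (t (s v)) (d (s u) (s v))" using walk_map[of t, OF tV tE d_walk[OF suV]] .
  have "d (s u) (s v) \<le> d u v" using d_le[OF w1] .
  moreover have "d u v \<le> d (s u) (s v)" using d_le[OF w2] ts[OF u] ts[OF v] by simp
  ultimately show ?thesis by simp
qed

lemma aut_F: assumes aut: "automorphism V E s" and u: "u \<in> V" and v: "v \<in> F u"
  shows "s v \<in> F (s u)"
proof -
  have bij: "bij_betw s V V" using aut[unfolded automorphism_def] by (rule conjunct1)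
  have vV: "v \<in> V" using v F_V by blast
  have "s v \<in> V" using bij_betw_apply[OF bij vV] .
  thus ?thesis using v aut_d[OF aut u vV] unfolding F_def by auto
qed

end



context adrg begin

lemma main: assumes aut: "automorphism V E s" and mv: "\<exists>v\<in>V. s v \<noteq> v"
  and nc: "\<not> cocktail_party V E"
  shows "card V \<le> 13 * card {v\<in>V. s v \<noteq> v}"
proof -
  have bij: "bij_betw s V V" and ed: "\<forall>u\<in>V. \<forall>v\<in>V. E u v \<longleftrightarrow> E (s u) (s v)"
    using aut[unfolded automorphism_def] by (rule conjunct1, rule conjunct2)
  have sV: "\<And>v. v \<in> V \<Longrightarrow> s v \<in> V" using bij_betw_apply[OF bij] .
  have sE: "E (s a) (s b)" if e: "E a b" for a b
  proof -
    have "E a b = E (s a) (s b)" using ed EV1[OF e] EV2[OF e] by blast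
    thus ?thesis using e by blast
  qed
  define P where "P = {v\<in>V. s v = v}"
  have mov: "{v\<in>V. s v \<noteq> v} = V - P" unfolding P_def by auto
  have fP: "finite P" unfolding P_def using finV by auto
  have PV: "P \<subseteq> V" unfolding P_def by auto
  have cmov: "card {v\<in>V. s v \<noteq> v} = card V - card P"
    unfolding mov using card_Diff_subset[OF fP PV] .
  have cPV: "card P \<le> card V" using card_mono[OF finV PV] .
  show ?thesis
  proof (cases "\<forall>u\<in>V. s u \<in> F u")
    case True
    have closed: "x \<in> P" if uP: "u \<in> P" and e: "E u x" for u x
    proof -
      have xV: "x \<in> V" using EV2[OF e] .
      have "E (s u) (s x)" using sE[OF e] .
      hence e2: "E u (s x)" using uP unfolding P_def by simp
      have "s x = x" using nbr_unique[OF xV True[rule_format, OF xV] F_self[OF xV] e2 e] .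
      thus ?thesis using xV unfolding P_def by simp
    qed
    have "P = {}"
    proof (rule ccontr)
      assume "P \<noteq> {}"
      then obtain u where uP: "u \<in> P" by auto
      have "v \<in> P" if v: "v \<in> V" for v
      proof -
        have uV: "u \<in> V" using uP PV by auto
        obtain n where "W u v n" using W_ex[OF uV v] by blast
        thus ?thesis
        proof (induction n arbitrary: v)
          case 0 thus ?case using uP by (simp add: W0)
        next
          case (Suc n)
          then obtain y where "W u y n" "E y v" by (auto simp: WS)
          thus ?case using Suc closed by blast
        qed
      qed
      thus False using mv unfolding P_def by auto
    qed
    thus ?thesis using cmov by simp
  next
    case False
    then obtain u0 where u0: "u0 \<in> V" "s u0 \<notin> F u0" by blast
    define G where "G = F u0"
    define L where "L = max (aa 1) (cc 2)"
    have fG: "finite G" unfolding G_def using F_fin by auto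
    have GV: "G \<subseteq> V" unfolding G_def using F_V by auto
    have su0V: "s u0 \<in> V" using sV u0 by auto
    have sg_out: "s g \<notin> F g" if g: "g \<in> G" for g
    proof
      assume a: "s g \<in> F g"
      have gV: "g \<in> V" using g GV by auto
      have "F g = F u0" using F_eq[OF u0(1)] g unfolding G_def by simp
      hence "s g \<in> F u0" using a by simp
      moreover have "s g \<in> F (s u0)" using aut_F[OF aut u0(1)] g unfolding G_def by simp
      ultimately have "F (s u0) = F u0"
      proof -
        assume a1: "s g \<in> F u0" and a2: "s g \<in> F (s u0)"
        have "F (s g) = F u0" using F_eq[OF u0(1) a1] .
        moreover have "F (s g) = F (s u0)" using F_eq[OF su0V a2] .
        ultimately show ?thesis by simp
      qed
      thus False using u0 F_self[OF su0V] by auto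
    qed
    have GP: "G \<inter> P = {}"
    proof -
      have "g \<notin> P" if "g \<in> G" for g
        using sg_out[OF that] that GV F_self unfolding P_def by fastforce
      thus ?thesis by auto
    qed
    have bound_g: "card {w\<in>P. E w g} \<le> L" if g: "g \<in> G" for g
    proof -
      have gV: "g \<in> V" using g GV by auto
      have sgV: "s g \<in> V" using sV gV by auto
      have sub: "{w\<in>P. E w g} \<subseteq> N (s g) \<inter> N g"
      proof
        fix w assume w: "w \<in> {w\<in>P. E w g}"
        hence "E g w" using Esym by auto
        hence "E (s g) (s w)" using sE by blast
        hence "E (s g) w" using w unfolding P_def by auto
        thus "w \<in> N (s g) \<inter> N g" using \<open>E g w\<close> w PV unfolding N_def by auto
      qed
      have "card {w\<in>P. E w g} \<le> card (N (s g) \<inter> N g)"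
        using card_mono[OF _ sub] N_fin by auto
      moreover have "card (N (s g) \<inter> N g) \<le> L"
      proof -
        have "d g (s g) = 1 \<or> d g (s g) = 2" using notF_d[OF gV sgV sg_out[OF g]] .
        thus ?thesis
        proof
          assume "d g (s g) = 1"
          hence "E g (s g)" using d_1[OF gV sgV] by simp
          thus ?thesis using card_a1 unfolding L_def by simp
        next
          assume "d g (s g) = 2"
          thus ?thesis using card_c2[OF gV sgV] unfolding L_def by simp
        qed
      qed
      ultimately show ?thesis by simp
    qed
    have one: "card {g\<in>G. E w g} = 1" if w: "w \<in> P" for w
    proof -
      have wV: "w \<in> V" using w PV by auto
      have wG: "w \<notin> F u0" using w GP unfolding G_def by auto
      have "{g\<in>G. E w g} = {nb w u0}"
      proof
        show "{nb w u0} \<subseteq> {g\<in>G. E w g}" using nb[OF u0(1) wV wG] unfolding G_def by auto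
        show "{g\<in>G. E w g} \<subseteq> {nb w u0}"
        proof
          fix g assume "g \<in> {g\<in>G. E w g}"
          thus "g \<in> {nb w u0}" using nb_eq[OF u0(1) wV wG, of g] unfolding G_def by auto
        qed
      qed
      thus ?thesis by simp
    qed
    have "(\<Sum>w\<in>P. card {g\<in>G. E w g}) = (\<Sum>g\<in>G. card {w\<in>P. E w g})"
      by (rule dcount[OF fP fG])
    moreover have "(\<Sum>w\<in>P. card {g\<in>G. E w g}) = (\<Sum>w\<in>P. 1)"
      by (rule sum.cong[OF refl]) (rule one)
    moreover have "(\<Sum>g\<in>G. card {w\<in>P. E w g}) \<le> (\<Sum>g\<in>G. L)" using bound_g by (rule sum_mono)
    ultimately have "card P \<le> (\<Sum>g\<in>G. L)" by simp
    hence cP: "card P \<le> card G * L" by simp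
    define Y where "Y = insert u0 (N u0)"
    define phi where "phi = (\<lambda>(g, y). if y = u0 then g else nb g y)"
    have gnotF: "g \<notin> F y" if g: "g \<in> G" and y: "y \<in> N u0" for g y
    proof
      assume a: "g \<in> F y"
      have yV: "y \<in> V" using y unfolding N_def by auto
      have "F g = F y" using F_eq[OF yV a] .
      moreover have "F g = F u0" using F_eq[OF u0(1)] g unfolding G_def by simp
      ultimately have "y \<in> F u0" using F_self[OF yV] by simp
      thus False using F_noedge[OF u0(1) F_self[OF u0(1)]] y unfolding N_def by auto
    qed
    have phiV: "phi ` (G \<times> Y) \<subseteq> V"
    proof
      fix z assume "z \<in> phi ` (G \<times> Y)"
      then obtain g y where gy: "g \<in> G" "y \<in> Y" "z = phi (g, y)" by auto
      show "z \<in> V"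
      proof (cases "y = u0")
        case True thus ?thesis using gy GV unfolding phi_def by auto
      next
        case False
        hence yN: "y \<in> N u0" using gy unfolding Y_def by auto
        have yV: "y \<in> V" using yN unfolding N_def by auto
        have "nb g y \<in> F y" using nb[OF yV _ gnotF[OF gy(1) yN]] gy GV by auto
        thus ?thesis using gy False F_V unfolding phi_def by auto
      qed
    qed
    have phi_inj: "inj_on phi (G \<times> Y)"
    proof (rule inj_onI)
      fix a b assume a: "a \<in> G \<times> Y" and b: "b \<in> G \<times> Y" and eq: "phi a = phi b"
      obtain g1 y1 where a': "a = (g1, y1)" by (cases a)
      obtain g2 y2 where b': "b = (g2, y2)" by (cases b)
      have g1: "g1 \<in> G" "y1 \<in> Y" using a a' by auto
      have g2: "g2 \<in> G" "y2 \<in> Y" using b b' by auto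
      have g1V: "g1 \<in> V" and g2V: "g2 \<in> V" using g1 g2 GV by auto
      have info: "phi (g, y) \<in> F y \<and> E g (phi (g, y)) \<and> y \<in> V" if "g \<in> G" "y \<in> N u0" for g y
      proof -
        have yV: "y \<in> V" using that unfolding N_def by auto
        have "y \<noteq> u0" using that Eirr unfolding N_def by auto
        thus ?thesis using nb[OF yV _ gnotF[OF that]] that GV yV unfolding phi_def by auto
      qed
      have notG: "phi (g, y) \<notin> G" if "g \<in> G" "y \<in> N u0" for g y
      proof
        assume "phi (g, y) \<in> G"
        hence "F (phi (g,y)) = F u0" using F_eq[OF u0(1)] unfolding G_def by simp
        moreover have "F (phi (g,y)) = F y" using F_eq info[OF that] by blast
        ultimately have "y \<in> F u0" using info[OF that] F_self by blast
        thus False using F_noedge[OF u0(1) F_self[OF u0(1)]] that unfolding N_def by auto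
      qed
      show "a = b"
      proof (cases "y1 = u0")
        case True
        hence p1: "phi a = g1" unfolding a' phi_def by simp
        show ?thesis
        proof (cases "y2 = u0")
          case True2: True
          hence "phi b = g2" unfolding b' phi_def by simp
          thus ?thesis using p1 eq a' b' True True2 by simp
        next
          case False
          hence "y2 \<in> N u0" using g2 unfolding Y_def by auto
          hence "phi b \<notin> G" using notG g2 b' by simp
          thus ?thesis using p1 eq g1 by simp
        qed
      next
        case False
        hence y1N: "y1 \<in> N u0" using g1 unfolding Y_def by auto
        show ?thesis
        proof (cases "y2 = u0")
          case True
          hence "phi b = g2" unfolding b' phi_def by simp
          moreover have "phi a \<notin> G" using notG g1 y1N a' by simp
          ultimately show ?thesis using eq g2 by simp
        next
          case False2: False
          hence y2N: "y2 \<in> N u0" using g2 unfolding Y_def by auto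
          have i1: "phi a \<in> F y1" "E g1 (phi a)" "y1 \<in> V" using info[OF g1(1) y1N] a' by auto
          have i2: "phi a \<in> F y2" "E g2 (phi a)" "y2 \<in> V" using info[OF g2(1) y2N] b' eq by auto
          have "F (phi a) = F y1" "F (phi a) = F y2" using F_eq i1 i2 by blast+
          hence "y1 \<in> F y2" using F_self[OF i1(3)] by simp
          moreover have "E u0 y1" "E u0 y2" using y1N y2N unfolding N_def by auto
          ultimately have y12: "y1 = y2" using nbr_unique[OF i2(3) _ F_self[OF i2(3)]] by blast
          have "E (phi a) g1" "E (phi a) g2" using i1(2) i2(2) Esym by auto
          hence "g1 = g2"
            using nbr_unique[OF u0(1), of g1 g2 "phi a"] g1 g2 unfolding G_def by blast
          thus ?thesis using a' b' y12 by simp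
        qed
      qed
    qed
    have "card (G \<times> Y) \<le> card V" using card_inj_on_le[OF phi_inj phiV finV] .
    moreover have "card (G \<times> Y) = card G * (k + 1)"
    proof -
      have "u0 \<notin> N u0" unfolding N_def using Eirr by auto
      hence "card Y = k + 1" unfolding Y_def using card_N[OF u0(1)] N_fin by simp
      thus ?thesis by (simp add: card_cartesian_product)
    qed
    ultimately have cG: "card G * (k + 1) \<le> card V" by simp
    have "13 * L \<le> 12 * (k + 1)" unfolding L_def using a1_bound[OF u0(1)] c_bound[OF u0(1) nc] by simp
    have "13 * card P \<le> card G * (13 * L)" using cP by simp
    also have "\<dots> \<le> card G * (12 * (k + 1))" using \<open>13 * L \<le> 12 * (k + 1)\<close> by simp
    also have "\<dots> = 12 * (card G * (k + 1))" by (simp add: algebra_simps)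
    also have "\<dots> \<le> 12 * card V" using cG by simp
    finally have "13 * card P \<le> 12 * card V" .
    thus ?thesis using cmov cPV by linarith
  qed
qed

end



theorem proposition5p10:
  fixes V :: "'a set" and E :: "'a \<Rightarrow> 'a \<Rightarrow> bool"
  assumes "distance_regular V E"
    and "diameter V E = 3"
    and "antipodal V E"
    and "\<not> cocktail_party V E"
  shows "13 * motion V E \<ge> enat (card V)"
proof -
  obtain c a b where sg: "simple_graph V E" and cn: "connected_graph V E" and
    cnt: "\<forall>v\<in>V. \<forall>w\<in>V.
        card {x \<in> V. E w x \<and> gdist V E v x + 1 = gdist V E v w} = c (gdist V E v w) \<and>
        card {x \<in> V. E w x \<and> gdist V E v x = gdist V E v w} = a (gdist V E v w) \<and>
        card {x \<in> V. E w x \<and> gdist V E v x = gdist V E v w + 1} = b (gdist V E v w)"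
    using assms(1) unfolding distance_regular_def by blast
  interpret adrg V E c a b
    using sg cn cnt assms(2,3) by unfold_locales auto
  define S where "S = {f. automorphism V E f \<and> (\<exists>v\<in>V. f v \<noteq> v)}"
  define M where "M = (\<lambda>f. enat (card {v \<in> V. f v \<noteq> v})) ` S"
  have mot: "motion V E = Inf M" unfolding motion_def S_def M_def by simp
  show ?thesis
  proof (cases "M = {}")
    case True
    hence "motion V E = \<infinity>" using mot by (simp add: Inf_enat_def)
    moreover have "(13::enat) * \<infinity> = \<infinity>" by (rule imult_infinity_right) simp
    ultimately show ?thesis by simp
  next
    case False
    hence "Inf M = (LEAST x. x \<in> M)" by (simp add: Inf_enat_def)
    moreover have "(LEAST x. x \<in> M) \<in> M" using False by (metis LeastI ex_in_conv)
    ultimately have "Inf M \<in> M" by simp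
    then obtain f where f: "f \<in> S" "Inf M = enat (card {v \<in> V. f v \<noteq> v})"
      unfolding M_def by auto
    have "card V \<le> 13 * card {v \<in> V. f v \<noteq> v}"
      using main[of f] f(1) assms(4) unfolding S_def by auto
    hence "enat (card V) \<le> enat (13 * card {v \<in> V. f v \<noteq> v})" by simp
    also have "\<dots> = 13 * motion V E" using mot f(2) by (simp add: numeral_eq_enat)
    finally show ?thesis .
  qed
qed



end
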